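(* Let $\mathcal{G}=(\mathcal{V},\mathcal{E},\mathcal{W})$ be an undirected weighted graph, let $\mathcal{E}_-$ be the set of negative-weight edges and $\mathcal{E}_+$ the set of positive-weight edges, with $|\mathcal{E}_-|>1$, and assume $\mathcal{G}_+=(\mathcal{V},\mathcal{E}_+)$ (with its weights) is connected. For each $k=(u_k,v_k)\in\mathcal{E}_-$ let $P_k\subseteq\mathcal{E}_+$ be the set of edges $e\in\mathcal{E}_+$ for which there exists a path in $\mathcal{G}_+$ from $u_k$ to $v_k$ using $e$, and assume $P_i\cap P_j=\emptyset$ for all distinct $i,j\in\mathcal{E}_-$. Let $\mathcal{R}_k(\mathcal{G}_+)=\mathcal{R}_{u_kv_k}(\mathcal{G}_+)$. Then $L(\mathcal{G})$ is positive semi-definite if and only if $|\mathcal{W}(k)|\le \mathcal{R}_k(\mathcal{G}_+)^{-1}$ for every $k\in\mathcal{E}_-$ (i.e. $|W_-|\le \mathbf{R}^{-1}$ with $W_-$ the diagonal matrix of negative weights and $\mathbf{R}=\mathrm{diag}(\mathcal{R}_k(\mathcal{G}_+))_{k\in\mathcal{E}_-}$).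
   Context: Weights $\mathcal{W}:\mathcal{E}\to\mathbb{R}\setminus\{0\}$; with an arbitrary edge orientation the incidence matrix $E$ has in the column of edge $(i,j)$ entry $+1$ in row $i$, $-1$ in row $j$, $0$ elsewhere; $L(\mathcal{G})=EWE^T$ with $W$ the diagonal weight matrix. Paths are simple paths. For a weighted graph $\mathcal{H}$ on $\mathcal{V}$, the effective resistance between $u,v$ is $\mathcal{R}_{uv}(\mathcal{H})=(\mathbf{e}_u-\mathbf{e}_v)^TL^{\dagger}(\mathcal{H})(\mathbf{e}_u-\mathbf{e}_v)$, with $L^{\dagger}$ the Moore–Penrose pseudo-inverse and $\mathbf{e}_u$ the standard basis vector of node $u$. *)

theory Defs
  imports "HOL-Analysis.Analysis"
begin

text \<open>Vertices are the elements of a finite type 'n. An undirected weighted graph is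
given by a set of edges, each stored with an arbitrary orientation (u,v), u ~= v,
and a weight function W on edges.\<close>

definition wgraph :: "('n::finite \<times> 'n) set \<Rightarrow> ('n \<times> 'n \<Rightarrow> real) \<Rightarrow> bool" where
  "wgraph E W \<longleftrightarrow> (\<forall>(u,v)\<in>E. u \<noteq> v \<and> (v,u) \<notin> E \<and> W (u,v) \<noteq> 0)"

definition inc_col :: "'n::finite \<times> 'n \<Rightarrow> real ^ 'n" where
  "inc_col e = axis (fst e) 1 - axis (snd e) 1"

text \<open>L = E W E^T, written as the sum over the columns of E.\<close>
definition laplacian :: "('n::finite \<times> 'n) set \<Rightarrow> ('n \<times> 'n \<Rightarrow> real) \<Rightarrow> real ^ 'n ^ 'n" where
  "laplacian E W = (\<Sum>e\<in>E. W e *\<^sub>R (\<chi> i j. inc_col e $ i * inc_col e $ j))"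

definition psd :: "real ^ 'n ^ 'n \<Rightarrow> bool" where
  "psd A \<longleftrightarrow> (\<forall>x. 0 \<le> x \<bullet> (A *v x))"

definition is_pinv :: "real ^ 'n ^ 'n \<Rightarrow> real ^ 'n ^ 'n \<Rightarrow> bool" where
  "is_pinv A B \<longleftrightarrow> A ** B ** A = A \<and> B ** A ** B = B \<and>
     transpose (A ** B) = A ** B \<and> transpose (B ** A) = B ** A"

definition pinv :: "real ^ 'n ^ 'n \<Rightarrow> real ^ 'n ^ 'n" where
  "pinv A = (THE B. is_pinv A B)"

definition eff_res :: "('n::finite \<times> 'n) set \<Rightarrow> ('n \<times> 'n \<Rightarrow> real) \<Rightarrow> 'n \<Rightarrow> 'n \<Rightarrow> real" where
  "eff_res E W u v = (let d = axis u 1 - axis v 1 in d \<bullet> (pinv (laplacian E W) *v d))"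

definition adj :: "('n \<times> 'n) set \<Rightarrow> 'n \<Rightarrow> 'n \<Rightarrow> bool" where
  "adj F a b \<longleftrightarrow> (a,b) \<in> F \<or> (b,a) \<in> F"

definition is_path :: "('n \<times> 'n) set \<Rightarrow> 'n list \<Rightarrow> 'n \<Rightarrow> 'n \<Rightarrow> bool" where
  "is_path F p u v \<longleftrightarrow> p \<noteq> [] \<and> hd p = u \<and> last p = v \<and> distinct p \<and>
     (\<forall>i. Suc i < length p \<longrightarrow> adj F (p!i) (p!Suc i))"

definition uses_edge :: "'n list \<Rightarrow> 'n \<times> 'n \<Rightarrow> bool" where
  "uses_edge p e \<longleftrightarrow> (\<exists>i. Suc i < length p \<and> ((p!i, p!Suc i) = e \<or> (p!Suc i, p!i) = e))"

definition connected_graph :: "('n \<times> 'n) set \<Rightarrow> bool" where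
  "connected_graph F \<longleftrightarrow> (\<forall>u v. \<exists>p. is_path F p u v)"

definition path_edges :: "('n \<times> 'n) set \<Rightarrow> 'n \<times> 'n \<Rightarrow> ('n \<times> 'n) set" where
  "path_edges F k = {e\<in>F. \<exists>p. is_path F p (fst k) (snd k) \<and> uses_edge p e}"

end

theory Submission
  imports Defs
begin


definition Q :: "('n::finite \<times> 'n) set \<Rightarrow> ('n \<times> 'n \<Rightarrow> real) \<Rightarrow> real^'n \<Rightarrow> real^'n \<Rightarrow> real" where
  "Q F W x y = (\<Sum>e\<in>F. W e * (inc_col e \<bullet> x) * (inc_col e \<bullet> y))"

lemma inc_inner: "inc_col e \<bullet> x = x $ fst e - x $ snd e"
  by (simp add: inc_col_def inner_diff_left inner_axis')

lemma inc_inner': "x \<bullet> inc_col e = x $ fst e - x $ snd e"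
  by (simp add: inc_col_def inner_diff_right inner_axis)

lemma lap_comp: "(laplacian F W *v y) $ i = (\<Sum>e\<in>F. W e * inc_col e $ i * (inc_col e \<bullet> y))"
proof -
  have "(laplacian F W *v y) $ i = (\<Sum>j\<in>UNIV. (\<Sum>e\<in>F. W e * (inc_col e $ i * inc_col e $ j)) * y $ j)"
    by (simp add: laplacian_def matrix_vector_mult_def)
  also have "\<dots> = (\<Sum>e\<in>F. \<Sum>j\<in>UNIV. W e * inc_col e $ i * (inc_col e $ j * y $ j))"
    by (subst sum.swap) (simp add: sum_distrib_right sum_distrib_left mult_ac)
  also have "\<dots> = (\<Sum>e\<in>F. W e * inc_col e $ i * (inc_col e \<bullet> y))"
    by (simp add: inner_vec_def sum_distrib_left)
  finally show ?thesis .
qed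

lemma lap_vec: "laplacian F W *v y = (\<Sum>e\<in>F. (W e * (inc_col e \<bullet> y)) *\<^sub>R inc_col e)"
  by (simp add: vec_eq_iff lap_comp mult_ac)

lemma lap_inner: "x \<bullet> (laplacian F W *v y) = Q F W x y"
  by (simp add: lap_vec inner_sum_right Q_def inner_commute mult_ac)

lemma Q_sym: "Q F W x y = Q F W y x"
  by (simp add: Q_def mult_ac)

lemma lap_inner': "(laplacian F W *v y) \<bullet> x = Q F W x y"
  by (simp add: inner_commute lap_inner)

lemma Q_lin_left_sum: "finite A \<Longrightarrow> Q F W (\<Sum>k\<in>A. c k *\<^sub>R f k) y = (\<Sum>k\<in>A. c k * Q F W (f k) y)"
  by (simp add: Q_def inner_sum_right sum_distrib_left sum_distrib_right mult_ac sum.swap[of _ F])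


lemma pinv_unique:
  fixes A B C :: "real^'n^'n"
  assumes b: "is_pinv A B" and c: "is_pinv A C"
  shows "B = C"
proof -
  have b1: "A ** B ** A = A" "B ** A ** B = B" "transpose (A ** B) = A ** B" "transpose (B ** A) = B ** A"
    using b by (auto simp: is_pinv_def)
  have c1: "A ** C ** A = A" "C ** A ** C = C" "transpose (A ** C) = A ** C" "transpose (C ** A) = C ** A"
    using c by (auto simp: is_pinv_def)
  have tA1: "transpose A = transpose A ** transpose C ** transpose A"
    by (metis c1(1) matrix_transpose_mul matrix_mul_assoc)
  have tA2: "transpose A = transpose A ** transpose B ** transpose A"
    by (metis b1(1) matrix_transpose_mul matrix_mul_assoc)
  have "B = B ** transpose (A ** B)" using b1 by (simp add: matrix_mul_assoc)
  also have "\<dots> = B ** transpose B ** transpose A" by (simp add: matrix_transpose_mul matrix_mul_assoc)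
  also have "\<dots> = B ** transpose B ** (transpose A ** transpose C ** transpose A)" using tA1 by simp
  also have "\<dots> = B ** transpose (A ** B) ** transpose (A ** C)" by (simp add: matrix_transpose_mul matrix_mul_assoc)
  also have "\<dots> = B ** A ** C" using b1 c1 by (simp add: matrix_mul_assoc)
  finally have B: "B = B ** A ** C" .
  have "C = transpose (C ** A) ** C" using c1 by (simp add: matrix_mul_assoc)
  also have "\<dots> = transpose A ** transpose C ** C" by (simp add: matrix_transpose_mul matrix_mul_assoc)
  also have "\<dots> = (transpose A ** transpose B ** transpose A) ** transpose C ** C" using tA2 by simp
  also have "\<dots> = transpose (B ** A) ** transpose (C ** A) ** C" by (simp add: matrix_transpose_mul matrix_mul_assoc)
  also have "\<dots> = B ** A ** C" using b1 c1 by (simp add: matrix_mul_assoc) (metis c1(2) matrix_mul_assoc)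
  finally show ?thesis using B by simp
qed

lemma pinv_works: "is_pinv A B \<Longrightarrow> is_pinv A (pinv A)"
  unfolding pinv_def by (rule theI[of "is_pinv A" B]) (auto intro: pinv_unique)

lemma path_const:
  assumes p: "is_path F p u v" and st: "\<And>i. Suc i < length p \<Longrightarrow> f (p!i) = f (p!Suc i)"
  shows "f u = f v"
proof -
  have "\<forall>i. i < length p \<longrightarrow> f (p!i) = f (p!0)"
  proof
    fix i show "i < length p \<longrightarrow> f (p!i) = f (p!0)"
      by (induction i) (use st in auto)
  qed
  moreover have "p \<noteq> []" "hd p = u" "last p = v" using p by (auto simp: is_path_def)
  ultimately show ?thesis
    by (metis diff_less hd_conv_nth last_conv_nth length_greater_0_conv zero_less_one)
qed

lemma finite_edges: "finite (F :: ('n::finite \<times> 'n) set)"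
  by (rule finite_subset[of _ UNIV]) auto

lemma Q_nonneg: "(\<And>e. e\<in>F \<Longrightarrow> W e > 0) \<Longrightarrow> 0 \<le> Q F W x x"
  unfolding Q_def mult.assoc by (intro sum_nonneg) (simp add: less_imp_le)

lemma Q_zero_edge:
  fixes F :: "('n::finite \<times> 'n) set"
  assumes pos: "\<And>e. e\<in>F \<Longrightarrow> W e > 0" and z: "Q F W x x = 0" and e: "e \<in> F"
  shows "x $ fst e = x $ snd e"
proof -
  have "\<forall>e\<in>F. W e * (inc_col e \<bullet> x) * (inc_col e \<bullet> x) = 0"
    using z unfolding Q_def
    by (subst (asm) sum_nonneg_eq_0_iff) (auto simp: finite_edges pos mult.assoc less_imp_le)
  then have "W e * (inc_col e \<bullet> x) * (inc_col e \<bullet> x) = 0" using e by auto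
  then show ?thesis using pos[OF e] by (simp add: inc_inner)
qed

lemma Q_zero_const:
  fixes F :: "('n::finite \<times> 'n) set"
  assumes pos: "\<And>e. e\<in>F \<Longrightarrow> W e > 0" and z: "Q F W x x = 0" and c: "connected_graph F"
  shows "x $ u = x $ v"
proof -
  obtain p where p: "is_path F p u v" using c by (auto simp: connected_graph_def)
  show ?thesis
  proof (rule path_const[OF p])
    fix i assume "Suc i < length p"
    then have "adj F (p!i) (p!Suc i)" using p by (auto simp: is_path_def)
    then show "x $ (p!i) = x $ (p!Suc i)"
      unfolding adj_def using Q_zero_edge[OF pos z] by force
  qed
qed


definition onev :: "real^'n" where "onev = (\<chi> i. 1)"
definition Pm :: "real^'n^'n" where "Pm = (\<chi> i j. 1 / real CARD('n))"

lemma Pm_vec: "Pm *v (x::real^'n) = (\<chi> i. (\<Sum>j\<in>UNIV. x$j) / real CARD('n))"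
  by (simp add: Pm_def matrix_vector_mult_def vec_eq_iff sum_divide_distrib)

lemma inc_const: "inc_col e \<bullet> (\<chi> i. c) = 0"
  by (simp add: inc_inner)

lemma lap_Pm: "laplacian F W *v (Pm *v (x::real^'n::finite)) = 0"
  by (simp add: lap_vec Pm_vec inc_const)

lemma sum_lap: "(\<Sum>j\<in>UNIV. (laplacian F W *v x) $ j) = 0"
proof -
  have "(\<Sum>j\<in>UNIV. (laplacian F W *v x) $ j) = onev \<bullet> (laplacian F W *v x)"
    by (simp add: inner_vec_def onev_def)
  also have "\<dots> = 0" by (simp add: lap_inner Q_def onev_def inc_const)
  finally show ?thesis .
qed

lemma Pm_lap: "Pm *v (laplacian F W *v (x::real^'n::finite)) = 0"
  by (simp add: Pm_vec sum_lap vec_eq_iff)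

lemma Pm_Pm: "Pm *v (Pm *v (x::real^'n)) = Pm *v x"
  by (simp add: Pm_vec vec_eq_iff)

lemma Pm_zero: "(\<Sum>j\<in>UNIV. x$j) = 0 \<Longrightarrow> Pm *v (x::real^'n) = 0"
  by (simp add: Pm_vec vec_eq_iff)

lemma inner_Pm: "(x::real^'n) \<bullet> (Pm *v x) = (\<Sum>j\<in>UNIV. x$j)^2 / real CARD('n)"
  by (simp add: Pm_vec inner_vec_def power2_eq_square flip: sum_distrib_right sum_divide_distrib)

lemma transpose_1_Pm: "transpose (mat 1 - Pm) = mat 1 - (Pm :: real^'n^'n)"
  by (simp add: transpose_def mat_def vec_eq_iff Pm_def)

lemma lap_pinv:
  fixes F :: "('n::finite \<times> 'n) set"
  assumes pos: "\<And>e. e\<in>F \<Longrightarrow> W e > 0" and c: "connected_graph F"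
  shows "is_pinv (laplacian F W) (pinv (laplacian F W))"
    and "\<And>d. (\<Sum>j\<in>UNIV. d$j) = 0 \<Longrightarrow> \<exists>z. laplacian F W *v z = d"
proof -
  define L where "L = laplacian F W"
  define M where "M = L + Pm"
  have Mv: "M *v x = L *v x + Pm *v x" for x by (simp add: M_def matrix_vector_mult_add_rdistrib)
  have "inj ((*v) M)"
    unfolding linear_inj_iff_eq_0[OF matrix_vector_mul_linear]
  proof (intro allI impI)
    fix x assume "M *v x = 0"
    then have "x \<bullet> (M *v x) = 0" by simp
    then have "Q F W x x + (\<Sum>j\<in>UNIV. x$j)^2 / real CARD('n) = 0"
      by (simp add: Mv inner_add_right lap_inner inner_Pm L_def)
    moreover have "Q F W x x \<ge> 0" using Q_nonneg pos by blast
    moreover have "(\<Sum>j\<in>UNIV. x$j)^2 / real CARD('n) \<ge> 0" by simp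
    ultimately have q0: "Q F W x x = 0" and s1: "(\<Sum>j\<in>UNIV. x$j)^2 / real CARD('n) = 0"
      using add_nonneg_eq_0_iff by blast+
    from s1 have s0: "(\<Sum>j\<in>UNIV. x$j) = 0" by simp
    have const: "x $ i = x $ j" for i j using Q_zero_const[OF pos q0 c] .
    fix i0
    have "(\<Sum>j\<in>UNIV. x$j) = real CARD('n) * x $ i0"
    proof -
      have "(\<Sum>j\<in>UNIV. x$j) = (\<Sum>j\<in>(UNIV::'n set). x$i0)" by (rule sum.cong[OF refl]) (rule const)
      then show ?thesis by simp
    qed
    then have "x $ i0 = 0" using s0 by simp
    then show "x = 0" using const by (metis vec_eq_iff zero_index)
  qed
  then obtain Mi where "Mi ** M = mat 1" using matrix_left_invertible_injective by blast
  then have Mi1: "Mi *v (M *v x) = x" and Mi2: "M *v (Mi *v x) = x" for x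
    using matrix_left_right_inverse[of M Mi]
    by (metis matrix_vector_mul_assoc matrix_vector_mul_lid)+
  have LP: "L *v (Pm *v x) = 0" for x by (simp add: L_def lap_Pm)
  have PL: "Pm *v (L *v x) = 0" for x by (simp add: L_def Pm_lap)
  have MiP: "Mi *v (Pm *v x) = Pm *v x" for x
    by (metis Mi1 Mv LP Pm_Pm add_0)
  have PMi: "Pm *v (Mi *v x) = Pm *v x" for x
  proof -
    have "Pm *v (M *v y) = Pm *v y" for y
      by (simp add: Mv matrix_vector_right_distrib PL Pm_Pm)
    from this[of "Mi *v x"] show ?thesis by (simp add: Mi2)
  qed
  have LMi: "L *v (Mi *v x) = x - Pm *v x" for x
    using Mi2[of x] PMi[of x] by (simp add: Mv algebra_simps)
  define B where "B = Mi - Pm"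
  have Bv: "B *v x = Mi *v x - Pm *v x" for x by (simp add: B_def matrix_vector_mult_diff_rdistrib)
  have LB: "L ** B = mat 1 - Pm"
    by (rule matrix_eq[THEN iffD2])
       (simp add: matrix_vector_mul_assoc[symmetric] Bv matrix_vector_mult_diff_distrib LP LMi matrix_vector_mult_diff_rdistrib)
  have MiL: "Mi *v (L *v x) = x - Pm *v x" for x
  proof -
    have "L *v x = M *v x - Pm *v x" by (simp add: Mv)
    then have "Mi *v (L *v x) = Mi *v (M *v x) - Mi *v (Pm *v x)"
      by (simp add: matrix_vector_mult_diff_distrib)
    then show ?thesis by (simp add: Mi1 MiP)
  qed
  have BL: "B ** L = mat 1 - Pm"
    by (rule matrix_eq[THEN iffD2])
       (simp add: matrix_vector_mul_assoc[symmetric] Bv PL MiL matrix_vector_mult_diff_rdistrib)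
  have "is_pinv L B"
    unfolding is_pinv_def
  proof (intro conjI)
    show "L ** B ** L = L"
      by (rule matrix_eq[THEN iffD2]) (simp add: LB matrix_vector_mul_assoc[symmetric] matrix_vector_mult_diff_rdistrib PL)
    show "B ** L ** B = B"
      by (rule matrix_eq[THEN iffD2])
         (simp add: BL matrix_vector_mul_assoc[symmetric] matrix_vector_mult_diff_rdistrib Bv PMi Pm_Pm matrix_vector_mult_diff_distrib)
    show "transpose (L ** B) = L ** B" by (simp add: LB transpose_1_Pm)
    show "transpose (B ** L) = B ** L" by (simp add: BL transpose_1_Pm)
  qed
  then show "is_pinv (laplacian F W) (pinv (laplacian F W))" using pinv_works L_def by blast
  fix d :: "real^'n" assume "(\<Sum>j\<in>UNIV. d$j) = 0"
  then have "L *v (Mi *v d) = d" by (simp add: LMi Pm_zero)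
  then show "\<exists>z. laplacian F W *v z = d" unfolding L_def by blast
qed


lemma inc_comp: "inc_col e $ a = (if a = fst e then 1 else 0) - (if a = snd e then 1 else 0)"
  by (simp add: inc_col_def axis_def)

lemma adj_sym: "adj F a b = adj F b a"
  by (auto simp: adj_def)

lemma term_le:
  assumes pos: "\<And>e. e\<in>F \<Longrightarrow> W e > 0" and all: "\<And>c. adj F a c \<Longrightarrow> \<phi>$c \<ge> \<phi>$a" and e: "e \<in> F"
  shows "W e * inc_col e $ a * (inc_col e \<bullet> \<phi>) \<le> 0"
proof -
  obtain x y where xy: "e = (x,y)" by (cases e)
  have w: "W e > 0" by (rule pos[OF e])
  show ?thesis
  proof (cases "a = x \<and> a \<noteq> y")
    case True
    then have "adj F a y" using e xy by (auto simp: adj_def)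
    then have "\<phi>$y \<ge> \<phi>$a" using all by auto
    moreover have "inc_col e $ a = 1" using True xy by (auto simp: inc_comp)
    moreover have "inc_col e \<bullet> \<phi> = \<phi>$a - \<phi>$y" using True xy by (simp add: inc_inner)
    ultimately show ?thesis using w by (simp add: mult_nonneg_nonpos)
  next
    case F1: False
    show ?thesis
    proof (cases "a = y \<and> a \<noteq> x")
      case True
      then have "adj F a x" using e xy by (auto simp: adj_def)
      then have "\<phi>$x \<ge> \<phi>$a" using all by auto
      moreover have "inc_col e $ a = -1" using True xy by (auto simp: inc_comp)
      moreover have "inc_col e \<bullet> \<phi> = \<phi>$x - \<phi>$a" using True xy by (simp add: inc_inner)
      ultimately show ?thesis using w by (simp add: mult_nonneg_nonneg)
    next
      case False
      have "inc_col e $ a = 0" using F1 False xy by (cases "a = x"; cases "a = y") (simp_all add: inc_comp)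
      then show ?thesis by simp
    qed
  qed
qed

lemma term_neg:
  assumes w: "W e > 0" and e: "e = (a,c) \<or> e = (c,a)" and lt: "\<phi>$c > \<phi>$a"
  shows "W e * inc_col e $ a * (inc_col e \<bullet> \<phi>) < 0"
proof -
  have ac: "a \<noteq> c" using lt by auto
  from e show ?thesis
  proof
    assume e: "e = (a,c)"
    have "inc_col e $ a = 1" using e ac by (simp add: inc_comp)
    moreover have "inc_col e \<bullet> \<phi> = \<phi>$a - \<phi>$c" using e by (simp add: inc_inner)
    ultimately show ?thesis using w lt by (simp add: mult_pos_neg)
  next
    assume e: "e = (c,a)"
    have "inc_col e $ a = -1" using e ac by (simp add: inc_comp)
    moreover have "inc_col e \<bullet> \<phi> = \<phi>$c - \<phi>$a" using e by (simp add: inc_inner)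
    ultimately show ?thesis using w lt by (simp add: mult_pos_pos)
  qed
qed

lemma step1:
  fixes F :: "('n::finite \<times> 'n) set"
  assumes pos: "\<And>e. e\<in>F \<Longrightarrow> W e > 0" and gt: "(laplacian F W *v \<phi>) $ a > 0"
  shows "\<exists>d. adj F a d \<and> \<phi>$d < \<phi>$a"
proof (rule ccontr)
  assume "\<not> ?thesis"
  then have all: "\<And>c. adj F a c \<Longrightarrow> \<phi>$c \<ge> \<phi>$a" by (meson not_le)
  have "(laplacian F W *v \<phi>) $ a \<le> 0"
    unfolding lap_comp by (rule sum_nonpos) (rule term_le[OF pos all])
  then show False using gt by simp
qed

lemma step2:
  fixes F :: "('n::finite \<times> 'n) set"
  assumes pos: "\<And>e. e\<in>F \<Longrightarrow> W e > 0" and ge: "(laplacian F W *v \<phi>) $ a \<ge> 0"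
    and c: "adj F c a" and lt: "\<phi>$c > \<phi>$a"
  shows "\<exists>d. adj F a d \<and> \<phi>$d < \<phi>$a"
proof (rule ccontr)
  assume "\<not> ?thesis"
  then have all: "\<And>c. adj F a c \<Longrightarrow> \<phi>$c \<ge> \<phi>$a" by (meson not_le)
  obtain e0 where e0: "e0 \<in> F" "e0 = (a,c) \<or> e0 = (c,a)" using c by (auto simp: adj_def)
  let ?t = "\<lambda>e. W e * inc_col e $ a * (inc_col e \<bullet> \<phi>)"
  have "(laplacian F W *v \<phi>) $ a = ?t e0 + sum ?t (F - {e0})"
    unfolding lap_comp using e0 finite_edges by (simp add: sum.remove)
  also have "sum ?t (F - {e0}) \<le> 0"
    by (rule sum_nonpos) (rule term_le[OF pos all], auto)
  moreover have "?t e0 < 0" using term_neg[of W e0 a c \<phi>] pos[OF e0(1)] e0(2) lt by blast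
  ultimately show False using ge by simp
qed

lemma descent:
  fixes F :: "('n::finite \<times> 'n) set"
  assumes pos: "\<And>e. e\<in>F \<Longrightarrow> W e > 0"
    and Ls: "(laplacian F W *v \<phi>) $ s > 0"
    and Lt: "\<And>a. a \<noteq> t \<Longrightarrow> (laplacian F W *v \<phi>) $ a \<ge> 0"
  shows "a = s \<or> (\<exists>c. adj F c a \<and> \<phi>$c > \<phi>$a) \<Longrightarrow>
    \<exists>p. p \<noteq> [] \<and> hd p = a \<and> last p = t \<and> successively (\<lambda>x y. adj F x y \<and> \<phi>$x > \<phi>$y) p"
proof (induction a rule: measure_induct_rule[of "\<lambda>a. card {x. \<phi>$x < \<phi>$a}"])
  case (less a)
  show ?case
  proof (cases "a = t")
    case True
    then show ?thesis by (intro exI[of _ "[t]"]) simp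
  next
    case False
    have "\<exists>d. adj F a d \<and> \<phi>$d < \<phi>$a"
    proof (cases "a = s")
      case True then show ?thesis using step1[OF pos, where \<phi>=\<phi> and a=a] Ls by simp
    next
      case False
      then obtain c where "adj F c a" "\<phi>$c > \<phi>$a" using less.prems by blast
      then show ?thesis using step2[OF pos Lt[OF \<open>a \<noteq> t\<close>]] by blast
    qed
    then obtain d where d: "adj F a d" "\<phi>$d < \<phi>$a" by blast
    have "{x. \<phi>$x < \<phi>$d} \<subset> {x. \<phi>$x < \<phi>$a}" using d by force
    then have "card {x. \<phi>$x < \<phi>$d} < card {x. \<phi>$x < \<phi>$a}" by (rule psubset_card_mono[rotated]) simp
    then obtain p where p: "p \<noteq> []" "hd p = d" "last p = t"
        "successively (\<lambda>x y. adj F x y \<and> \<phi>$x > \<phi>$y) p"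
      using less.IH[of d] d by blast
    then obtain p' where pp: "p = d # p'" by (cases p) simp_all
    show ?thesis
      using p d unfolding pp by (intro exI[of _ "a # d # p'"]) simp
  qed
qed

lemma sorted_gt_distinct: "sorted_wrt (\<lambda>a b. f a > (f b::real)) xs \<Longrightarrow> distinct xs"
  by (induction xs) auto

lemma lap_neg: "(laplacian F W *v (- \<phi>)) $ a = - (laplacian F W *v \<phi>) $ a"
  by (simp add: lap_comp inner_minus_right sum_negf)

lemma succ_distinct:
  assumes "successively (\<lambda>x y. adj F x y \<and> (\<phi>::real^'n)$x > \<phi>$y) p"
  shows "distinct p"
proof -
  have "successively (\<lambda>x y. \<phi>$x > \<phi>$y) p"
    by (rule successively_mono[OF assms]) simp
  then have "sorted_wrt (\<lambda>x y. \<phi>$x > \<phi>$y) p"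
    by (subst (asm) successively_conv_sorted_wrt) (auto simp: transp_def)
  then show ?thesis by (rule sorted_gt_distinct)
qed

lemma key_path:
  fixes F :: "('n::finite \<times> 'n) set"
  assumes pos: "\<And>e. e\<in>F \<Longrightarrow> W e > 0"
    and Ls: "(laplacian F W *v \<phi>) $ s > 0" and Lt: "(laplacian F W *v \<phi>) $ t < 0"
    and Lo: "\<And>a. a \<noteq> s \<Longrightarrow> a \<noteq> t \<Longrightarrow> (laplacian F W *v \<phi>) $ a = 0"
    and xy: "adj F x y" "\<phi>$x > \<phi>$y"
  shows "\<exists>p i. is_path F p s t \<and> Suc i < length p \<and> p!i = x \<and> p!Suc i = y"
proof -
  let ?P = "\<lambda>x y. adj F x y \<and> \<phi>$x > \<phi>$y"
  have Lt': "(laplacian F W *v \<phi>) $ a \<ge> 0" if "a \<noteq> t" for a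
    using Ls Lo[of a] that by (cases "a = s") auto
  have Ls2: "(laplacian F W *v (- \<phi>)) $ t > 0" using Lt by (simp add: lap_neg)
  have Lt2: "(laplacian F W *v (- \<phi>)) $ a \<ge> 0" if "a \<noteq> s" for a
    using Lt Lo[of a] that by (cases "a = t") (simp_all add: lap_neg)
  have ypre: "y = s \<or> (\<exists>c. adj F c y \<and> \<phi>$c > \<phi>$y)" using xy by blast
  have "\<exists>q. q \<noteq> [] \<and> hd q = y \<and> last q = t \<and> successively ?P q"
    using pos Ls Lt' ypre by (rule descent)
  then obtain q where q: "q \<noteq> []" "hd q = y" "last q = t" "successively ?P q"
    by (elim exE conjE) (rule that)
  have xpre: "x = t \<or> (\<exists>c. adj F c x \<and> (- \<phi>)$c > (- \<phi>)$x)"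
  proof -
    have "adj F y x" using xy(1) by (simp add: adj_def disj_commute)
    then show ?thesis using xy(2) by (intro disjI2 exI[of _ y]) simp
  qed
  have "\<exists>r. r \<noteq> [] \<and> hd r = x \<and> last r = s \<and> successively (\<lambda>a b. adj F a b \<and> (- \<phi>)$a > (- \<phi>)$b) r"
    using pos Ls2 Lt2 xpre by (rule descent)
  then obtain r where r: "r \<noteq> []" "hd r = x" "last r = s"
      "successively (\<lambda>a b. adj F a b \<and> (- \<phi>)$a > (- \<phi>)$b) r"
    by (elim exE conjE) (rule that)
  obtain r' where rr: "r = x # r'" using r by (cases r) simp_all
  obtain q' where qq: "q = y # q'" using q by (cases q) simp_all
  define p where "p = rev r' @ x # y # q'"
  have p_eq: "p = rev r @ q" by (simp add: p_def rr qq)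
  have sr: "successively ?P (rev r)"
    unfolding successively_rev by (rule successively_mono[OF r(4)]) (auto simp: adj_sym)
  have sp: "successively ?P p"
    unfolding p_eq successively_append_iff using sr q(4) xy r(1) q(1)
    by (simp add: last_rev r(2) q(2))
  have "is_path F p s t"
    unfolding is_path_def
  proof (intro conjI)
    show "p \<noteq> []" by (simp add: p_def)
    show "hd p = s" using r by (simp add: p_eq hd_rev)
    show "last p = t" using q by (simp add: p_eq)
    show "distinct p" by (rule succ_distinct[OF sp])
    show "\<forall>i. Suc i < length p \<longrightarrow> adj F (p ! i) (p ! Suc i)"
      using sp unfolding successively_conv_nth by blast
  qed
  moreover have "Suc (length r') < length p" "p ! length r' = x" "p ! Suc (length r') = y"
    by (simp_all add: p_def nth_append)
  ultimately show ?thesis by blast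
qed

lemma edge_in_path:
  fixes F :: "('n::finite \<times> 'n) set"
  assumes pos: "\<And>e. e\<in>F \<Longrightarrow> W e > 0"
    and Ls: "(laplacian F W *v \<phi>) $ s > 0" and Lt: "(laplacian F W *v \<phi>) $ t < 0"
    and Lo: "\<And>a. a \<noteq> s \<Longrightarrow> a \<noteq> t \<Longrightarrow> (laplacian F W *v \<phi>) $ a = 0"
    and e: "e \<in> F" and ne: "\<phi>$(fst e) \<noteq> \<phi>$(snd e)"
  shows "e \<in> path_edges F (s,t)"
proof -
  obtain a b where ab: "e = (a,b)" by (cases e)
  have adj1: "adj F a b" "adj F b a" using e ab by (auto simp: adj_def)
  have "\<exists>p. is_path F p s t \<and> uses_edge p e"
  proof (cases "\<phi>$a > \<phi>$b")
    case True
    then obtain p i where "is_path F p s t" "Suc i < length p" "p!i = a" "p!Suc i = b"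
      using key_path[OF pos Ls Lt Lo adj1(1)] by blast
    then show ?thesis using ab unfolding uses_edge_def by blast
  next
    case False
    then have "\<phi>$b > \<phi>$a" using ne ab by auto
    then obtain p i where "is_path F p s t" "Suc i < length p" "p!i = b" "p!Suc i = a"
      using key_path[OF pos Ls Lt Lo adj1(2)] by blast
    then show ?thesis using ab unfolding uses_edge_def by blast
  qed
  then show ?thesis using e by (simp add: path_edges_def)
qed

lemma orth:
  fixes F :: "('n::finite \<times> 'n) set"
  assumes pos: "\<And>e. e\<in>F \<Longrightarrow> W e > 0" and c: "connected_graph F"
    and Ls: "(laplacian F W *v \<phi>) $ s > 0" and Lt: "(laplacian F W *v \<phi>) $ t < 0"
    and Lo: "\<And>a. a \<noteq> s \<Longrightarrow> a \<noteq> t \<Longrightarrow> (laplacian F W *v \<phi>) $ a = 0"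
    and disj: "path_edges F (u,v) \<inter> path_edges F (s,t) = {}"
  shows "\<phi>$u = \<phi>$v"
proof -
  obtain p where p: "is_path F p u v" using c by (auto simp: connected_graph_def)
  show ?thesis
  proof (rule path_const[OF p])
    fix i assume i: "Suc i < length p"
    then have "adj F (p!i) (p!Suc i)" using p by (auto simp: is_path_def)
    then obtain e where e: "e \<in> F" "e = (p!i, p!Suc i) \<or> e = (p!Suc i, p!i)"
      unfolding adj_def by blast
    then have "uses_edge p e" using i unfolding uses_edge_def by blast
    then have "e \<in> path_edges F (u,v)" using e p unfolding path_edges_def by auto
    then have "e \<notin> path_edges F (s,t)" using disj by blast
    then have "\<phi>$(fst e) = \<phi>$(snd e)" using edge_in_path[OF pos Ls Lt Lo e(1)] by blast
    then show "\<phi>$(p!i) = \<phi>$(p!Suc i)" using e(2) by auto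
  qed
qed



lemma sum_single:
  assumes "finite A" "k \<in> A" "\<And>l. l \<in> A \<Longrightarrow> l \<noteq> k \<Longrightarrow> g l = 0"
  shows "sum g A = g k"
proof -
  have "sum g A = g k + sum g (A - {k})" using assms by (simp add: sum.remove)
  also have "sum g (A - {k}) = 0" using assms by (intro sum.neutral) auto
  finally show ?thesis by simp
qed

lemma Q_diff: "Q F W (x - y) (x - y) = Q F W x x - 2 * Q F W y x + Q F W y y"
  by (simp add: Q_def inner_diff_right algebra_simps sum_subtractf sum.distrib sum_distrib_left)

lemma sum_inc: "(\<Sum>j\<in>UNIV. inc_col k $ j) = 0"
  by (simp add: inc_comp sum_subtractf)


theorem theorem3:
  fixes E :: "('n::finite \<times> 'n) set" and W :: "'n \<times> 'n \<Rightarrow> real"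
  defines "Eneg \<equiv> {e\<in>E. W e < 0}"
      and "Epos \<equiv> {e\<in>E. W e > 0}"
  assumes "wgraph E W"
      and "card Eneg > 1"
      and "connected_graph Epos"
      and "\<And>i j. i \<in> Eneg \<Longrightarrow> j \<in> Eneg \<Longrightarrow> i \<noteq> j \<Longrightarrow>
             path_edges Epos i \<inter> path_edges Epos j = {}"
  shows "psd (laplacian E W) \<longleftrightarrow>
         (\<forall>k\<in>Eneg. \<bar>W k\<bar> \<le> inverse (eff_res Epos W (fst k) (snd k)))"
proof -
  note wg = \<open>wgraph E W\<close> and conn = \<open>connected_graph Epos\<close>
  note disj = assms(6)
  have pos: "\<And>e. e \<in> Epos \<Longrightarrow> W e > 0" by (simp add: Epos_def)
  have finE: "finite Eneg" by (rule finite_edges)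
  have nz: "W e \<noteq> 0" if "e \<in> E" for e using wg that by (cases e) (auto simp: wgraph_def)
  have neq: "fst k \<noteq> snd k" if "k \<in> Eneg" for k using wg that by (cases k) (auto simp: wgraph_def Eneg_def)
  define Lp where "Lp = laplacian Epos W"
  define G where "G = pinv Lp"
  define \<phi> where "\<phi> k = G *v inc_col k" for k
  define R where "R k = inc_col k \<bullet> \<phi> k" for k
  have pinvLp: "is_pinv Lp G" using lap_pinv(1)[where F=Epos and W=W, OF pos conn] by (simp add: Lp_def G_def)
  have Lphi: "Lp *v \<phi> k = inc_col k" for k
  proof -
    obtain z where z: "Lp *v z = inc_col k" using lap_pinv(2)[where F=Epos and W=W, OF pos conn sum_inc] Lp_def by blast
    have "Lp *v \<phi> k = (Lp ** G ** Lp) *v z" by (simp add: \<phi>_def z[symmetric] matrix_vector_mul_assoc matrix_mul_assoc)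
    also have "\<dots> = inc_col k" using pinvLp z by (simp add: is_pinv_def)
    finally show ?thesis .
  qed
  have Reff: "eff_res Epos W (fst k) (snd k) = R k" for k
    by (simp add: eff_res_def Let_def R_def \<phi>_def G_def Lp_def inc_col_def)
  have Qphi: "Q Epos W (\<phi> k) y = inc_col k \<bullet> y" for k y
  proof -
    have "Q Epos W (\<phi> k) y = y \<bullet> (Lp *v \<phi> k)" by (simp add: Lp_def lap_inner Q_sym)
    then show ?thesis by (simp add: Lphi inner_commute)
  qed
  have orth2: "inc_col l \<bullet> \<phi> k = 0" if k: "k \<in> Eneg" and l: "l \<in> Eneg" and kl: "k \<noteq> l" for k l
  proof -
    obtain s t where st: "k = (s,t)" by (cases k)
    obtain u v where uv: "l = (u,v)" by (cases l)
    have "s \<noteq> t" using neq[OF k] st by simp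
    then have Ls: "(laplacian Epos W *v \<phi> k) $ s > 0" and Lt: "(laplacian Epos W *v \<phi> k) $ t < 0"
      and Lo: "\<And>a. a \<noteq> s \<Longrightarrow> a \<noteq> t \<Longrightarrow> (laplacian Epos W *v \<phi> k) $ a = 0"
      using Lphi[of k] by (simp_all add: Lp_def[symmetric] st inc_comp)
    have dj: "path_edges Epos (u,v) \<inter> path_edges Epos (s,t) = {}"
      using disj[OF l k] kl st uv by auto
    have "\<phi> k $ u = \<phi> k $ v" using pos conn Ls Lt Lo dj by (rule orth)
    then show ?thesis by (simp add: uv inc_inner)
  qed
  have Rpos: "R k > 0" if k: "k \<in> Eneg" for k
  proof -
    have R: "R k = Q Epos W (\<phi> k) (\<phi> k)" by (simp add: Qphi R_def inner_commute)
    have "R k \<ge> 0" unfolding R using Q_nonneg pos by blast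
    moreover have "R k \<noteq> 0"
    proof
      assume "R k = 0"
      then have q0: "Q Epos W (\<phi> k) (\<phi> k) = 0" using R by simp
      have "Q Epos W (\<phi> k) (axis (fst k) 1) = 0"
        unfolding Q_def using Q_zero_edge[where F=Epos and W=W, OF pos q0] by (intro sum.neutral) (auto simp: inc_inner)
      moreover have "inc_col k \<bullet> axis (fst k) 1 = 1" using neq[OF k] by (simp add: inc_inner axis_def)
      ultimately show False using Qphi by simp
    qed
    ultimately show ?thesis by simp
  qed
  have Esplit: "Q E W x x = Q Epos W x x + (\<Sum>k\<in>Eneg. W k * (inc_col k \<bullet> x)^2)" for x
  proof -
    have "E = Epos \<union> Eneg" using nz by (force simp: Epos_def Eneg_def)
    moreover have "Epos \<inter> Eneg = {}" by (auto simp: Epos_def Eneg_def)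
    ultimately show ?thesis
      unfolding Q_def by (simp add: sum.union_disjoint finite_edges power2_eq_square mult.assoc)
  qed
  have psd_iff: "psd (laplacian E W) \<longleftrightarrow> (\<forall>x. 0 \<le> Q E W x x)"
    by (simp add: psd_def lap_inner)
  show ?thesis
  proof
    assume "psd (laplacian E W)"
    then have P: "0 \<le> Q E W x x" for x using psd_iff by blast
    show "\<forall>k\<in>Eneg. \<bar>W k\<bar> \<le> inverse (eff_res Epos W (fst k) (snd k))"
    proof
      fix k assume k: "k \<in> Eneg"
      have "(\<Sum>l\<in>Eneg. W l * (inc_col l \<bullet> \<phi> k)^2) = W k * (inc_col k \<bullet> \<phi> k)^2"
        by (rule sum_single[OF finE k]) (simp add: orth2[OF k])
      then have "0 \<le> R k + W k * (R k)^2"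
        using P[of "\<phi> k"] by (simp add: Esplit Qphi R_def)
      moreover have "W k < 0" using k by (simp add: Eneg_def)
      moreover have "R k > 0" using Rpos[OF k] .
      ultimately have "\<bar>W k\<bar> * R k \<le> 1"
      proof -
        assume a: "0 \<le> R k + W k * (R k)^2" and w: "W k < 0" and r: "R k > 0"
        have "0 \<le> R k * (1 + W k * R k)" using a by (simp add: power2_eq_square algebra_simps)
        then have "0 \<le> 1 + W k * R k" using r by (simp add: zero_le_mult_iff)
        then show ?thesis using w by simp
      qed
      then show "\<bar>W k\<bar> \<le> inverse (eff_res Epos W (fst k) (snd k))"
        using Rpos[OF k] by (simp add: Reff field_simps)
    qed
  next
    assume H: "\<forall>k\<in>Eneg. \<bar>W k\<bar> \<le> inverse (eff_res Epos W (fst k) (snd k))"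
    have HR: "- W k * R k \<le> 1" if k: "k \<in> Eneg" for k
    proof -
      have "\<bar>W k\<bar> \<le> inverse (R k)" using H k Reff by simp
      moreover have "W k < 0" using k by (simp add: Eneg_def)
      ultimately show ?thesis using Rpos[OF k] by (simp add: field_simps)
    qed
    show "psd (laplacian E W)"
      unfolding psd_iff
    proof
      fix x :: "real^'n"
      define c where "c k = inc_col k \<bullet> x" for k :: "'n \<times> 'n"
      define t where "t k = - W k * c k" for k :: "'n \<times> 'n"
      define y where "y = (\<Sum>k\<in>Eneg. t k *\<^sub>R \<phi> k)"
      define S where "S = (\<Sum>k\<in>Eneg. - W k * (c k)^2)"
      have "Q Epos W y x = (\<Sum>k\<in>Eneg. t k * Q Epos W (\<phi> k) x)"
        unfolding y_def by (rule Q_lin_left_sum[OF finE])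
      also have "\<dots> = S"
        unfolding S_def by (rule sum.cong) (simp_all add: Qphi t_def c_def power2_eq_square)
      finally have yx: "Q Epos W y x = S" .
      have cy: "inc_col k \<bullet> y = t k * R k" if k: "k \<in> Eneg" for k
      proof -
        have "inc_col k \<bullet> y = (\<Sum>l\<in>Eneg. t l * (inc_col k \<bullet> \<phi> l))"
          by (simp add: y_def inner_sum_right)
        also have "\<dots> = t k * (inc_col k \<bullet> \<phi> k)"
          by (rule sum_single[OF finE k]) (simp add: orth2 k)
        finally show ?thesis by (simp add: R_def)
      qed
      have "Q Epos W y y = (\<Sum>k\<in>Eneg. t k * Q Epos W (\<phi> k) y)"
        by (subst (1) y_def) (rule Q_lin_left_sum[OF finE])
      also have "\<dots> = (\<Sum>k\<in>Eneg. t k * (inc_col k \<bullet> y))" by (simp add: Qphi)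
      also have "\<dots> = (\<Sum>k\<in>Eneg. (t k)^2 * R k)"
        by (rule sum.cong) (simp_all add: cy power2_eq_square)
      also have "\<dots> \<le> S"
        unfolding S_def
      proof (rule sum_mono)
        fix k assume k: "k \<in> Eneg"
        have "W k < 0" using k by (simp add: Eneg_def)
        then have a: "0 \<le> - W k * (c k)^2" by (simp add: mult_nonpos_nonneg)
        have "(t k)^2 * R k = (- W k * (c k)^2) * (- W k * R k)"
          by (simp add: t_def power2_eq_square)
        also have "\<dots> \<le> (- W k * (c k)^2) * 1"
          by (rule mult_left_mono[OF HR[OF k] a])
        finally show "(t k)^2 * R k \<le> - W k * (c k)^2" by simp
      qed
      finally have yy: "Q Epos W y y \<le> S" .
      have "0 \<le> Q Epos W (x - y) (x - y)" using Q_nonneg pos by blast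
      then have "S \<le> Q Epos W x x" using yy yx by (simp add: Q_diff)
      moreover have "Q E W x x = Q Epos W x x - S"
        by (simp add: Esplit S_def c_def sum_negf)
      ultimately show "0 \<le> Q E W x x" by simp
    qed
  qed
qed

end
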